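(* Let $i,j$ be integers with $0\leq j\leq i$. Then $$\sum_{\lambda\in O(i,j)}(-1)^{ol(\lambda)}\,q^{|\lambda|+ol(\lambda)\,(i-\ell(\lambda)+1)}\,q^{(i-\ell(\lambda))(j-\ell(\lambda))}=1,$$ where $O(i,j)$ is the set of overpartitions defined in the context.
   Context: An overpartition with $k$ nonnegative parts is a sequence $\lambda=(\lambda_1,\dots,\lambda_k)$ of integers with $\lambda_1\geq\cdots\geq\lambda_k\geq 0$ in which the first occurrence (leftmost position) of each value may or may not be marked as "overlined" (the value $0$ may also be overlined); thus overlined parts have distinct values. Its size is $|\lambda|=\sum_r\lambda_r$, its length $\ell(\lambda)=k$ counts all parts including zeros, and $ol(\lambda)$ is the number of overlined parts. For $0\leq k\leq j$, $O(i,j,k)$ denotes the set of overpartitions $\lambda$ with exactly $k$ nonnegative parts such that (1) every part is at most $j-1$; and (2) when $k\geq 2$, for each $1\leq s\leq k-1$ and each position $r$ with $\lambda_r=j-s$, at least $k-s$ of the parts $\lambda_{r+1},\dots,\lambda_k$ are overlined. (The paper views each overline of an element of $O(i,j,k)$ as carrying weight $w(\lambda)=i-k+1$; this appears as the factor $i-\ell(\lambda)+1$ in the exponent.) $O(i,0,0)$ consists only of the empty partition, and $O(i,j)=\biguplus_{k=0}^{j}O(i,j,k)$. *)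

theory Defs
  imports Main
begin

text \<open>An overpartition with k nonnegative parts is represented as a list of length k of
pairs (value, overlined).\<close>

type_synonym overpartition = "(nat \<times> bool) list"

definition is_overpartition :: "overpartition \<Rightarrow> bool" where
  "is_overpartition xs \<longleftrightarrow>
     sorted_wrt (\<lambda>a b. fst b \<le> fst a) xs \<and>
     (\<forall>r < length xs. snd (xs ! r) \<longrightarrow> (\<forall>r' < r. fst (xs ! r') \<noteq> fst (xs ! r)))"

definition op_size :: "overpartition \<Rightarrow> nat" where
  "op_size xs = (\<Sum>r<length xs. fst (xs ! r))"

definition op_ol :: "overpartition \<Rightarrow> nat" where
  "op_ol xs = card {r. r < length xs \<and> snd (xs ! r)}"

text \<open>O(i,j,k) (positions 0-indexed: position r has later parts r+1,...,k-1).
The set does not actually depend on i.\<close>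
definition O3 :: "nat \<Rightarrow> nat \<Rightarrow> nat \<Rightarrow> overpartition set" where
  "O3 i j k = {xs. is_overpartition xs \<and> length xs = k \<and> k \<le> j \<and>
     (\<forall>r < k. fst (xs ! r) + 1 \<le> j) \<and>
     (2 \<le> k \<longrightarrow> (\<forall>s \<in> {1..k-1}. \<forall>r < k. fst (xs ! r) = j - s \<longrightarrow>
         k - s \<le> card {t. r < t \<and> t < k \<and> snd (xs ! t)}))}"

definition O2 :: "nat \<Rightarrow> nat \<Rightarrow> overpartition set" where
  "O2 i j = (\<Union>k \<in> {0..j}. O3 i j k)"

end

theory Submission
  imports Defs
begin

definition cnt :: "overpartition \<Rightarrow> nat \<Rightarrow> nat" where
  "cnt xs r = card {t. r < t \<and> t < length xs \<and> snd (xs ! t)}"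

definition S :: "nat \<Rightarrow> overpartition set" where
  "S j = {xs. is_overpartition xs \<and> length xs \<le> j \<and>
     (\<forall>r<length xs. fst (xs ! r) \<le> (j - length xs) + cnt xs r)}"

definition P :: "nat \<Rightarrow> overpartition set" where
  "P j = {xs \<in> S j. \<forall>x\<in>set xs. 0 < fst x}"

definition g :: "nat \<times> bool \<Rightarrow> nat \<times> bool" where
  "g p = (Suc (fst p), snd p)"

definition W :: "'a::comm_ring_1 \<Rightarrow> nat \<Rightarrow> nat \<Rightarrow> overpartition \<Rightarrow> 'a" where
  "W q i j lam = (-1) ^ op_ol lam *
            q ^ (op_size lam + op_ol lam * (i - length lam + 1)) *
            q ^ ((i - length lam) * (j - length lam))"

definition F :: "'a::comm_ring_1 \<Rightarrow> nat \<Rightarrow> nat \<Rightarrow> 'a" where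
  "F q i j = (\<Sum>xs\<in>S j. W q i j xs)"

lemma cnt_le: "cnt xs r \<le> length xs - Suc r"
proof -
  have "{t. r < t \<and> t < length xs \<and> snd (xs ! t)} \<subseteq> {Suc r..<length xs}" by auto
  then have "cnt xs r \<le> card {Suc r..<length xs}" unfolding cnt_def
    by (intro card_mono) auto
  then show ?thesis by simp
qed

lemma cnt_zero: "length xs \<le> Suc r \<Longrightarrow> cnt xs r = 0"
  unfolding cnt_def by (rule card_eq_0_iff[THEN iffD2]) auto

lemma cnt_map: "cnt (map g ys) r = cnt ys r"
  unfolding cnt_def by (rule arg_cong[where f=card]) (auto simp: g_def)

lemma cnt_snoc: "r < length ys \<Longrightarrow> cnt (ys @ [x]) r = cnt ys r + (if snd x then 1 else 0)"
proof -
  assume r: "r < length ys"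
  let ?A = "{t. r < t \<and> t < length ys \<and> snd (ys ! t)}"
  have fin: "finite ?A" by (rule finite_subset[of _ "{..<length ys}"]) auto
  show ?thesis
  proof (cases "snd x")
    case True
    have "{t. r < t \<and> t < length (ys @ [x]) \<and> snd ((ys @ [x]) ! t)} = insert (length ys) ?A"
      using True r by (auto simp: nth_append less_Suc_eq)
    then show ?thesis using fin True unfolding cnt_def by simp
  next
    case False
    have "{t. r < t \<and> t < length (ys @ [x]) \<and> snd ((ys @ [x]) ! t)} = ?A"
      using False r by (auto simp: nth_append less_Suc_eq)
    then show ?thesis using False unfolding cnt_def by simp
  qed
qed

lemma op_ol_snoc: "op_ol (ys @ [x]) = op_ol ys + (if snd x then 1 else 0)"
proof -
  let ?A = "{t. t < length ys \<and> snd (ys ! t)}"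
  have fin: "finite ?A" by (rule finite_subset[of _ "{..<length ys}"]) auto
  show ?thesis
  proof (cases "snd x")
    case True
    have "{t. t < length (ys @ [x]) \<and> snd ((ys @ [x]) ! t)} = insert (length ys) ?A"
      using True by (auto simp: nth_append less_Suc_eq)
    then show ?thesis using fin True unfolding op_ol_def by simp
  next
    case False
    have "{t. t < length (ys @ [x]) \<and> snd ((ys @ [x]) ! t)} = ?A"
      using False by (auto simp: nth_append less_Suc_eq)
    then show ?thesis using False unfolding op_ol_def by simp
  qed
qed

lemma op_size_snoc: "op_size (ys @ [x]) = op_size ys + fst x"
  unfolding op_size_def by (simp add: nth_append)

lemma op_size_map: "op_size (map g ys) = op_size ys + length ys"
  unfolding op_size_def by (simp add: g_def sum_Suc)

lemma op_ol_map: "op_ol (map g ys) = op_ol ys"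
  unfolding op_ol_def by (rule arg_cong[where f=card]) (auto simp: g_def)

lemma is_op_snoc: "is_overpartition (ys @ [x]) \<longleftrightarrow> is_overpartition ys \<and>
   (\<forall>y\<in>set ys. fst x \<le> fst y) \<and> (snd x \<longrightarrow> (\<forall>y\<in>set ys. fst y \<noteq> fst x))"
  unfolding is_overpartition_def sorted_wrt_append
  by (auto simp: nth_append less_Suc_eq all_set_conv_all_nth)

lemma is_op_map: "is_overpartition (map g ys) \<longleftrightarrow> is_overpartition ys"
  unfolding is_overpartition_def sorted_wrt_map by (auto simp: g_def)

lemma O3_iff: "xs \<in> O3 i j k \<longleftrightarrow> length xs = k \<and> xs \<in> S j"
proof
  assume A: "xs \<in> O3 i j k"
  then have op: "is_overpartition xs" and k: "length xs = k" and kj: "k \<le> j"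
    and b: "\<forall>r<k. fst (xs ! r) + 1 \<le> j"
    and c: "2 \<le> k \<longrightarrow> (\<forall>s \<in> {1..k-1}. \<forall>r < k. fst (xs ! r) = j - s \<longrightarrow>
         k - s \<le> card {t. r < t \<and> t < k \<and> snd (xs ! t)})"
    unfolding O3_def by auto
  have "fst (xs ! r) \<le> (j - length xs) + cnt xs r" if r: "r < length xs" for r
  proof (cases "fst (xs ! r) \<le> j - k")
    case True then show ?thesis using k by simp
  next
    case False
    define s where "s = j - fst (xs ! r)"
    have b1: "fst (xs ! r) + 1 \<le> j" using b r k by auto
    have s1: "s \<in> {1..k-1}" using False b1 kj unfolding s_def by auto
    have k2: "2 \<le> k" using s1 by auto
    have e: "fst (xs ! r) = j - s" using b1 unfolding s_def by auto
    have "k - s \<le> card {t. r < t \<and> t < k \<and> snd (xs ! t)}"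
      using c k2 s1 r k e by blast
    then have "k - s \<le> cnt xs r" unfolding cnt_def k .
    then show ?thesis using e k kj s1 by auto
  qed
  then show "length xs = k \<and> xs \<in> S j" using op k kj unfolding S_def by auto
next
  assume A: "length xs = k \<and> xs \<in> S j"
  then have op: "is_overpartition xs" and k: "length xs = k" and kj: "k \<le> j"
    and c: "\<forall>r<k. fst (xs ! r) \<le> (j - k) + cnt xs r"
    unfolding S_def by auto
  have b: "\<forall>r<k. fst (xs ! r) + 1 \<le> j"
  proof (intro allI impI)
    fix r assume r: "r < k"
    have "cnt xs r \<le> k - Suc r" using cnt_le[of xs r] k by simp
    then show "fst (xs ! r) + 1 \<le> j" using c r kj by force
  qed
  have "\<forall>s \<in> {1..k-1}. \<forall>r < k. fst (xs ! r) = j - s \<longrightarrow>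
         k - s \<le> card {t. r < t \<and> t < k \<and> snd (xs ! t)}"
  proof (intro ballI allI impI)
    fix s r assume s: "s \<in> {1..k-1}" and r: "r < k" and e: "fst (xs ! r) = j - s"
    have "j - s \<le> (j - k) + cnt xs r" using c r e by auto
    then have "k - s \<le> cnt xs r" using s kj by auto
    then show "k - s \<le> card {t. r < t \<and> t < k \<and> snd (xs ! t)}" unfolding cnt_def k .
  qed
  then show "xs \<in> O3 i j k" using op k kj b unfolding O3_def by auto
qed

lemma O2_eq: "O2 i j = S j"
proof (rule set_eqI)
  fix xs
  show "xs \<in> O2 i j \<longleftrightarrow> xs \<in> S j"
    unfolding O2_def using O3_iff[of xs i j "length xs"] O3_iff[of xs i j]
    by (auto simp: S_def)
qed

lemma finite_S: "finite (S j)"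
proof -
  have "S j \<subseteq> {xs. set xs \<subseteq> {..j+j} \<times> (UNIV::bool set) \<and> length xs \<le> j}"
  proof
    fix xs assume xs: "xs \<in> S j"
    have "fst x \<le> j + j" if x: "x \<in> set xs" for x
    proof -
      obtain r where r: "r < length xs" "xs ! r = x" using x by (auto simp: in_set_conv_nth)
      have "cnt xs r \<le> length xs" using cnt_le[of xs r] by simp
      then show ?thesis using xs r unfolding S_def by force
    qed
    then show "xs \<in> {xs. set xs \<subseteq> {..j+j} \<times> (UNIV::bool set) \<and> length xs \<le> j}"
      using xs unfolding S_def by force
  qed
  moreover have "finite {xs. set xs \<subseteq> {..j+j} \<times> (UNIV::bool set) \<and> length xs \<le> j}"
    by (rule finite_lists_length_le) auto
  ultimately show ?thesis by (rule finite_subset)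
qed

lemma S_snoc0: "ys @ [(0,b)] \<in> S j \<longleftrightarrow> is_overpartition ys \<and> (b \<longrightarrow> (\<forall>y\<in>set ys. 0 < fst y))
   \<and> length ys < j \<and> (\<forall>r<length ys. fst (ys ! r) \<le> (j - Suc (length ys)) + cnt ys r + (if b then 1 else 0))"
  unfolding S_def
  by (auto simp: is_op_snoc nth_append less_Suc_eq cnt_snoc cnt_zero)

lemma S_snocF: "ys @ [(0,False)] \<in> S j \<longleftrightarrow> 1 \<le> j \<and> ys \<in> S (j - 1)"
  by (subst S_snoc0) (auto simp: S_def)

lemma S_snocT: "ys @ [(0,True)] \<in> S j \<longleftrightarrow> ys \<in> P j \<and> length ys < j"
  by (subst S_snoc0) (auto simp: P_def S_def)

lemma S_map: "1 \<le> j \<Longrightarrow> map g ys \<in> S j \<longleftrightarrow> ys \<in> S (j - 1)"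
proof
  assume j: "1 \<le> j" and A: "map g ys \<in> S j"
  have len: "length ys \<le> j - 1"
  proof (rule ccontr)
    assume "\<not> length ys \<le> j - 1"
    then have lj: "length ys = j" using A unfolding S_def by auto
    have c0: "cnt (map g ys) (j - 1) = 0" by (rule cnt_zero) (use lj in simp)
    have "fst (map g ys ! (j - 1)) \<le> (j - length (map g ys)) + cnt (map g ys) (j - 1)"
      using A lj j unfolding S_def by auto
    then show False using c0 lj j by (auto simp: g_def)
  qed
  show "ys \<in> S (j - 1)" using A len unfolding S_def
    by (auto simp: is_op_map cnt_map g_def)
next
  assume j: "1 \<le> j" and A: "ys \<in> S (j - 1)"
  show "map g ys \<in> S j" using A j unfolding S_def
    by (auto simp: is_op_map cnt_map g_def)
qed

lemma P_len: "xs \<in> P j \<Longrightarrow> 1 \<le> j \<Longrightarrow> length xs < j"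
proof (rule ccontr)
  assume A: "xs \<in> P j" and j: "1 \<le> j" and "\<not> length xs < j"
  then have lj: "length xs = j" unfolding P_def S_def by auto
  have c0: "cnt xs (j - 1) = 0" by (rule cnt_zero) (use lj in simp)
  have "fst (xs ! (j - 1)) \<le> (j - length xs) + cnt xs (j - 1)"
    using A lj j unfolding P_def S_def by auto
  moreover have "xs ! (j - 1) \<in> set xs" using lj j by simp
  then have "0 < fst (xs ! (j - 1))" using A unfolding P_def by auto
  ultimately show False using c0 lj by simp
qed

definition f :: "nat \<times> bool \<Rightarrow> nat \<times> bool" where
  "f p = (fst p - 1, snd p)"

lemma P_image: "1 \<le> j \<Longrightarrow> P j = map g ` S (j - 1)"
proof
  assume j: "1 \<le> j"
  show "P j \<subseteq> map g ` S (j - 1)"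
  proof
    fix xs assume xs: "xs \<in> P j"
    have e: "map g (map f xs) = xs"
      using xs unfolding P_def by (auto simp: g_def f_def intro!: map_idI)
    then have "map g (map f xs) \<in> S j" using xs unfolding P_def by auto
    then have "map f xs \<in> S (j - 1)" using S_map[OF j] by blast
    then show "xs \<in> map g ` S (j - 1)" using e by (metis image_eqI)
  qed
  show "map g ` S (j - 1) \<subseteq> P j"
    using S_map[OF j] unfolding P_def by (auto simp: g_def)
qed

lemma W_map: "length ys < j \<Longrightarrow> length ys \<le> i \<Longrightarrow>
   W q i j (map g ys) = q ^ i * W q i (j - 1) ys"
proof -
  assume a: "length ys < j" "length ys \<le> i"
  obtain a b where i: "i = length ys + a" and jj: "j = length ys + b + 1"
    using a by (metis add.commute add_Suc_right le_Suc_ex le_add_diff_inverse less_eq_Suc_le plus_1_eq_Suc)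
  have ex: "op_size ys + length ys + op_ol ys * (a + 1) + a * (b + 1) =
        i + (op_size ys + op_ol ys * (a + 1) + a * b)"
    using i by (simp add: algebra_simps)
  have "W q i j (map g ys) = (-1) ^ op_ol ys *
        q ^ (op_size ys + length ys + op_ol ys * (a + 1) + a * (b + 1))"
    unfolding W_def op_size_map op_ol_map length_map using i jj by (simp add: power_add)
  also have "\<dots> = q ^ i * ((-1) ^ op_ol ys * q ^ (op_size ys + op_ol ys * (a + 1)) * q ^ (a * b))"
    unfolding ex by (simp add: power_add algebra_simps)
  also have "\<dots> = q ^ i * W q i (j - 1) ys"
    unfolding W_def using i jj by simp
  finally show ?thesis .
qed

lemma W_snocF: "W q i j (ys @ [(0,False)]) = W q (i - 1) (j - 1) ys"
  unfolding W_def op_size_snoc op_ol_snoc by simp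

lemma W_snocT: "length ys < j \<Longrightarrow> j \<le> i \<Longrightarrow>
   W q i j (ys @ [(0,True)]) = - q * W q (i - 1) j ys"
proof -
  assume a: "length ys < j" "j \<le> i"
  obtain a b where i: "i = length ys + 1 + a" and jj: "j = length ys + b + 1"
    using a by (metis add.commute add_Suc_right le_Suc_ex le_add_diff_inverse less_eq_Suc_le plus_1_eq_Suc order.trans less_imp_le)
  have ex: "op_size ys + (op_ol ys + 1) * (a + 1) + a * b =
        1 + (op_size ys + op_ol ys * (a + 1)) + a * (b + 1)"
    by (simp add: algebra_simps)
  have "W q i j (ys @ [(0,True)]) = (-1) ^ (op_ol ys + 1) *
        q ^ (op_size ys + (op_ol ys + 1) * (a + 1) + a * b)"
    unfolding W_def op_size_snoc op_ol_snoc using i jj by (simp add: power_add)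
  also have "\<dots> = - q * ((-1) ^ op_ol ys * q ^ (op_size ys + op_ol ys * (a + 1)) * q ^ (a * (b + 1)))"
    unfolding ex by (simp add: power_add)
  also have "\<dots> = - q * W q (i - 1) j ys"
    unfolding W_def using i jj by simp
  finally show ?thesis .
qed

lemma sumP: "1 \<le> j \<Longrightarrow> j \<le> i + 1 \<Longrightarrow> (\<Sum>xs\<in>P j. W q i j xs) = q ^ i * F q i (j - 1)"
proof -
  assume j: "1 \<le> j" and ji: "j \<le> i + 1"
  have inj: "inj_on (map g) (S (j - 1))"
    by (rule inj_on_subset[OF inj_mapI]) (auto simp: inj_def g_def)
  have "(\<Sum>xs\<in>P j. W q i j xs) = (\<Sum>ys\<in>S (j - 1). W q i j (map g ys))"
    unfolding P_image[OF j] by (rule sum.reindex[OF inj, unfolded comp_def])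
  also have "\<dots> = (\<Sum>ys\<in>S (j - 1). q ^ i * W q i (j - 1) ys)"
  proof (rule sum.cong[OF refl])
    fix ys assume "ys \<in> S (j - 1)"
    then have "length ys \<le> j - 1" unfolding S_def by auto
    then show "W q i j (map g ys) = q ^ i * W q i (j - 1) ys"
      using j ji by (intro W_map) auto
  qed
  finally show ?thesis unfolding F_def by (simp add: sum_distrib_left)
qed

lemma S_split: "1 \<le> j \<Longrightarrow> S j = P j \<union> ((\<lambda>ys. ys @ [(0,False)]) ` S (j - 1)
   \<union> (\<lambda>ys. ys @ [(0,True)]) ` P j)"
proof
  assume j: "1 \<le> j"
  show "P j \<union> ((\<lambda>ys. ys @ [(0,False)]) ` S (j - 1) \<union> (\<lambda>ys. ys @ [(0,True)]) ` P j) \<subseteq> S j"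
    using S_snocF S_snocT P_len j unfolding P_def by auto
  show "S j \<subseteq> P j \<union> ((\<lambda>ys. ys @ [(0,False)]) ` S (j - 1) \<union> (\<lambda>ys. ys @ [(0,True)]) ` P j)"
  proof
    fix xs assume xs: "xs \<in> S j"
    show "xs \<in> P j \<union> ((\<lambda>ys. ys @ [(0,False)]) ` S (j - 1) \<union> (\<lambda>ys. ys @ [(0,True)]) ` P j)"
    proof (cases "\<forall>x\<in>set xs. 0 < fst x")
      case True then show ?thesis using xs unfolding P_def by auto
    next
      case False
      then obtain x where x: "x \<in> set xs" "fst x = 0" by auto
      then have ne: "xs \<noteq> []" by auto
      define ys where "ys = butlast xs"
      have e: "xs = ys @ [last xs]" unfolding ys_def using ne by simp
      have op: "is_overpartition (ys @ [last xs])" using xs e unfolding S_def by auto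
      have "fst (last xs) = 0"
      proof (cases "x = last xs")
        case True then show ?thesis using x by simp
      next
        case False
        then have "x \<in> set ys" using x e by (metis butlast_snoc in_set_butlast_appendI rotate1.simps(2) set_ConsD set_rotate1)
        then show ?thesis using op x unfolding is_op_snoc by fastforce
      qed
      then obtain b where lb: "last xs = (0, b)" by (metis prod.collapse)
      show ?thesis
      proof (cases b)
        case True
        then have "ys \<in> P j" using xs e lb S_snocT by metis
        then show ?thesis using e lb True by auto
      next
        case False
        then have "ys \<in> S (j - 1)" using xs e lb S_snocF by metis
        then show ?thesis using e lb False by auto
      qed
    qed
  qed
qed

lemma F_rec: "1 \<le> j \<Longrightarrow> j \<le> i \<Longrightarrow>
  F q i j = q ^ i * F q i (j - 1) + F q (i - 1) (j - 1) - q ^ i * F q (i - 1) (j - 1)"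
proof -
  assume j: "1 \<le> j" and ji: "j \<le> i"
  have fP: "finite (P j)" using finite_S unfolding P_def by auto
  have fS: "finite (S (j - 1))" by (rule finite_S)
  have d1: "P j \<inter> ((\<lambda>ys. ys @ [(0,False)]) ` S (j - 1) \<union> (\<lambda>ys. ys @ [(0,True)]) ` P j) = {}"
    unfolding P_def by auto
  have d2: "(\<lambda>ys. ys @ [(0,False)]) ` S (j - 1) \<inter> (\<lambda>ys. ys @ [(0,True)]) ` P j = {}"
    by auto
  have injF: "inj_on (\<lambda>ys. ys @ [(0::nat,False)]) A" for A by (auto simp: inj_on_def)
  have injT: "inj_on (\<lambda>ys. ys @ [(0::nat,True)]) A" for A by (auto simp: inj_on_def)
  have s2: "(\<Sum>xs\<in>(\<lambda>ys. ys @ [(0,False)]) ` S (j - 1). W q i j xs) = F q (i - 1) (j - 1)"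
    unfolding F_def by (simp add: sum.reindex[OF injF] W_snocF)
  have "(\<Sum>xs\<in>(\<lambda>ys. ys @ [(0,True)]) ` P j. W q i j xs) = (\<Sum>ys\<in>P j. - q * W q (i - 1) j ys)"
    using P_len[OF _ j] ji by (simp add: sum.reindex[OF injT] W_snocT)
  also have "\<dots> = - q * (q ^ (i - 1) * F q (i - 1) (j - 1))"
    using sumP[of j "i - 1" q] j ji by (simp add: sum_negf sum_distrib_left[symmetric])
  also have "\<dots> = - (q ^ i * F q (i - 1) (j - 1))"
    using j ji by (cases i) auto
  finally have s3: "(\<Sum>xs\<in>(\<lambda>ys. ys @ [(0,True)]) ` P j. W q i j xs) = - (q ^ i * F q (i - 1) (j - 1))" .
  have "F q i j = (\<Sum>xs\<in>P j. W q i j xs) + ((\<Sum>xs\<in>(\<lambda>ys. ys @ [(0,False)]) ` S (j - 1). W q i j xs)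
      + (\<Sum>xs\<in>(\<lambda>ys. ys @ [(0,True)]) ` P j. W q i j xs))"
    unfolding F_def S_split[OF j]
    using fP fS d1 d2 by (simp add: sum.union_disjoint)
  moreover have "(\<Sum>xs\<in>P j. W q i j xs) = q ^ i * F q i (j - 1)" by (rule sumP[OF j]) (use ji in simp)
  ultimately show ?thesis using s2 s3 by simp
qed

lemma F_one: "j \<le> i \<Longrightarrow> F q i j = 1"
proof (induction j arbitrary: i)
  case 0
  have "S 0 = {[]}" unfolding S_def by (auto simp: is_overpartition_def)
  then show ?case unfolding F_def W_def by (simp add: op_ol_def op_size_def)
next
  case (Suc j)
  have "F q i (Suc j) = q ^ i * F q i j + F q (i - 1) j - q ^ i * F q (i - 1) j"
    using F_rec[of "Suc j" i q] Suc.prems by simp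
  also have "\<dots> = 1" using Suc.IH[of i] Suc.IH[of "i - 1"] Suc.prems by simp
  finally show ?case .
qed

theorem theorem3p1:
  fixes i j :: nat and q :: "'a :: comm_ring_1"
  assumes "j \<le> i"
  shows "(\<Sum>lam\<in>O2 i j. (-1) ^ op_ol lam *
            q ^ (op_size lam + op_ol lam * (i - length lam + 1)) *
            q ^ ((i - length lam) * (j - length lam))) = 1"
  using F_one[OF assms, of q] unfolding F_def W_def O2_eq .

end
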